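(* Let $c\in\mathcal M$ and let $a,b\in\mathbb R$ with $b\neq 0$. A tangent vector $h\in T_c\mathcal M$ is horizontal for the elastic metric $G^{a,b}$ (i.e. $G^{a,b}_c(h,mv)=0$ for all $m\in\mathcal C$) if and only if, for all $t\in[0,1]$, $$\big((a/b)^2-1\big)\langle \nabla_th,\nabla_tv\rangle-\langle\nabla_t^2h,v\rangle+|c'|^{-1}\langle\nabla_tc',v\rangle\langle\nabla_th,v\rangle=0 .$$ In particular, for $a=1,\ b=\tfrac12$ (the metric $G=G^{1,1/2}$), $h$ is horizontal iff $3\langle \nabla_th,\nabla_tv\rangle-\langle\nabla_t^2h,v\rangle+|c'|^{-1}\langle\nabla_tc',v\rangle\langle\nabla_th,v\rangle=0$ for all $t$. Moreover, for $G$ and any $w\in T_c\mathcal M$, a function $m\in\mathcal C$ is such that $w-mv$ is horizontal (so that $w=mv+(w-mv)$ is the decomposition of $w$ into a vertical part $mv$ and a horizontal part) if and only if $m$ satisfies $$m''-\langle \nabla_tc'/|c'|,v\rangle m'-4|\nabla_tv|^2m=\langle\nabla_t^2w,v\rangle-3\langle\nabla_tw,\nabla_tv\rangle-\langle\nabla_tc'/|c'|,v\rangle\langle\nabla_tw,v\rangle \quad\text{on }[0,1].$$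
   Context: $(M,\langle\cdot,\cdot\rangle)$ is a Riemannian manifold with norm $|\cdot|$ and Levi-Civita connection $\nabla$. $\mathcal M$ is the set of smooth immersions $c:[0,1]\to M$ ($c'(t)\neq0$ for all $t$); $T_c\mathcal M$ is the space of smooth vector fields $w$ along $c$. For a vector field $w$ along $c$, $\nabla_tw$ denotes the covariant derivative along $c$, $v:=c'/|c'|$, $w^T:=\langle w,v\rangle v$, $w^N:=w-w^T$. Arc-length derivative and measure: $\nabla_\ell:=|c'|^{-1}\nabla_t$, $\mathrm d\ell:=|c'(t)|\mathrm dt$. The elastic metric with parameters $a,b$ is $$G^{a,b}_c(w,w)=|w(0)|^2+\int_0^1 a^2\Big(|(\nabla_\ell w)^N|^2+b^2|(\nabla_\ell w)^T|^2\Big)\mathrm d\ell,$$ and $G:=G^{1,1/2}$. $\mathcal C:=\{m\in C^\infty([0,1],\mathbb R): m(0)=m(1)=0\}$; the vertical space at $c$ is $\{mv: m\in\mathcal C\}$ and the horizontal space is its $G^{a,b}$-orthogonal complement in $T_c\mathcal M$. *)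

theory Defs
  imports "HOL-Analysis.Analysis"
begin

text \<open>Vector fields along the curve c are represented in a parallel orthonormal frame
along c: a vector field along c is a map [0,1] -> E (E a Euclidean space modelling the
tangent space), the covariant derivative along c becomes the ordinary derivative, and
the Riemannian inner product becomes the inner product of E.  The curve c enters only
through its velocity field c', represented by u.\<close>

definition I01 :: "real set" where "I01 = {0..1}"

definition nablat :: "(real \<Rightarrow> 'a::real_normed_vector) \<Rightarrow> real \<Rightarrow> 'a" where
  "nablat w t = vector_derivative w (at t within I01)"

definition smooth01 :: "(real \<Rightarrow> 'a::real_normed_vector) \<Rightarrow> bool" where
  "smooth01 f \<longleftrightarrow> (\<exists>D :: nat \<Rightarrow> real \<Rightarrow> 'a. (\<forall>t\<in>I01. D 0 t = f t) \<and>
      (\<forall>k. \<forall>t\<in>I01. (D k has_vector_derivative D (Suc k) t) (at t within I01)))"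

definition immersion :: "(real \<Rightarrow> 'a::euclidean_space) \<Rightarrow> bool" where
  "immersion u \<longleftrightarrow> smooth01 u \<and> (\<forall>t\<in>I01. u t \<noteq> 0)"

definition unitv :: "(real \<Rightarrow> 'a::euclidean_space) \<Rightarrow> real \<Rightarrow> 'a" where
  "unitv u t = (1 / norm (u t)) *\<^sub>R u t"

definition tpart :: "(real \<Rightarrow> 'a::euclidean_space) \<Rightarrow> real \<Rightarrow> 'a \<Rightarrow> 'a" where
  "tpart u t x = (x \<bullet> unitv u t) *\<^sub>R unitv u t"

definition npart :: "(real \<Rightarrow> 'a::euclidean_space) \<Rightarrow> real \<Rightarrow> 'a \<Rightarrow> 'a" where
  "npart u t x = x - tpart u t x"

definition nablal :: "(real \<Rightarrow> 'a::euclidean_space) \<Rightarrow> (real \<Rightarrow> 'a) \<Rightarrow> real \<Rightarrow> 'a" where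
  "nablal u w t = (1 / norm (u t)) *\<^sub>R nablat w t"

definition Gq :: "real \<Rightarrow> real \<Rightarrow> (real \<Rightarrow> 'a::euclidean_space) \<Rightarrow> (real \<Rightarrow> 'a) \<Rightarrow> real" where
  "Gq a b u w = (norm (w 0))\<^sup>2 +
     integral I01 (\<lambda>t. (a\<^sup>2 * (norm (npart u t (nablal u w t)))\<^sup>2
                       + b\<^sup>2 * (norm (tpart u t (nablal u w t)))\<^sup>2) * norm (u t))"

definition Gbil :: "real \<Rightarrow> real \<Rightarrow> (real \<Rightarrow> 'a::euclidean_space) \<Rightarrow> (real \<Rightarrow> 'a) \<Rightarrow> (real \<Rightarrow> 'a) \<Rightarrow> real" where
  "Gbil a b u w1 w2 = (Gq a b u (\<lambda>t. w1 t + w2 t) - Gq a b u (\<lambda>t. w1 t - w2 t)) / 4"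

definition Cfun :: "(real \<Rightarrow> real) set" where
  "Cfun = {m. smooth01 m \<and> m 0 = 0 \<and> m 1 = 0}"

definition horizontal :: "real \<Rightarrow> real \<Rightarrow> (real \<Rightarrow> 'a::euclidean_space) \<Rightarrow> (real \<Rightarrow> 'a) \<Rightarrow> bool" where
  "horizontal a b u h \<longleftrightarrow> (\<forall>m\<in>Cfun. Gbil a b u h (\<lambda>t. m t *\<^sub>R unitv u t) = 0)"

end

theory Submission imports Defs begin

lemma at_I01_nbot: "t \<in> I01 \<Longrightarrow> at t within I01 \<noteq> bot"
  unfolding I01_def using trivial_limit_within[of t "{0..1::real}"] by simp

lemma nablat_eq: "t \<in> I01 \<Longrightarrow> (f has_vector_derivative f') (at t within I01) \<Longrightarrow> nablat f t = f'"
  unfolding nablat_def by (rule vector_derivative_within[OF at_I01_nbot])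

lemma hvd_cong: "t \<in> I01 \<Longrightarrow> (\<And>s. s \<in> I01 \<Longrightarrow> f s = g s) \<Longrightarrow>
   (f has_vector_derivative f') (at t within I01) \<Longrightarrow> (g has_vector_derivative f') (at t within I01)"
  using has_vector_derivative_transform_within[of f f' t I01 1 g] by auto

lemma nablat_cong: assumes "t \<in> I01" "\<And>s. s \<in> I01 \<Longrightarrow> f s = g s" shows "nablat f t = nablat g t"
proof (cases "f differentiable (at t within I01)")
  case True
  then have "(f has_vector_derivative nablat f t) (at t within I01)"
    unfolding nablat_def using vector_derivative_works by blast
  then have "(g has_vector_derivative nablat f t) (at t within I01)" using hvd_cong assms by blast
  then show ?thesis using nablat_eq assms by metis
next
  case False
  have "\<not> g differentiable (at t within I01)"
  proof
    assume "g differentiable (at t within I01)"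
    then have "(g has_vector_derivative nablat g t) (at t within I01)"
      unfolding nablat_def using vector_derivative_works by blast
    then have "(f has_vector_derivative nablat g t) (at t within I01)" using hvd_cong[of t g f] assms by metis
    then show False using False unfolding has_vector_derivative_def differentiable_def by blast
  qed
  then show ?thesis using False unfolding nablat_def vector_derivative_def
    by (metis differentiable_def has_vector_derivative_def)
qed

definition D1 :: "(real \<Rightarrow> 'a::real_normed_vector) \<Rightarrow> bool" where
  "D1 f \<longleftrightarrow> (\<forall>t\<in>I01. (f has_vector_derivative nablat f t) (at t within I01))"

fun Ck :: "nat \<Rightarrow> (real \<Rightarrow> 'a::real_normed_vector) \<Rightarrow> bool" where
  "Ck 0 f = True"
| "Ck (Suc k) f = (D1 f \<and> Ck k (nablat f))"

lemma D1_cong: "D1 f \<Longrightarrow> (\<And>s. s \<in> I01 \<Longrightarrow> f s = g s) \<Longrightarrow> D1 g"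
  unfolding D1_def using hvd_cong nablat_cong by metis

lemma Ck_cong: "Ck k f \<Longrightarrow> (\<And>s. s \<in> I01 \<Longrightarrow> f s = g s) \<Longrightarrow> Ck k g"
proof (induction k arbitrary: f g)
  case 0 then show ?case by simp
next
  case (Suc k)
  then show ?case using D1_cong[of f g] nablat_cong[of _ f g] by auto
qed

lemma Ck_mono: "Ck (Suc k) f \<Longrightarrow> Ck k f"
proof (induction k arbitrary: f)
  case 0 then show ?case by simp
next
  case (Suc k) then show ?case by auto
qed

lemma Ck_le_aux: "Ck (j + d) f \<Longrightarrow> Ck j f"
proof (induction d)
  case 0 then show ?case by simp
next
  case (Suc d) then show ?case by (metis Ck_mono add_Suc_right)
qed

lemma Ck_le: "Ck k f \<Longrightarrow> j \<le> k \<Longrightarrow> Ck j f"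
  using Ck_le_aux[of j "k - j" f] by simp

lemma D1I: "(\<And>t. t \<in> I01 \<Longrightarrow> (f has_vector_derivative f' t) (at t within I01)) \<Longrightarrow> D1 f"
  unfolding D1_def using nablat_eq by metis

lemma D1_nablat: "(\<And>t. t \<in> I01 \<Longrightarrow> (f has_vector_derivative f' t) (at t within I01)) \<Longrightarrow> t \<in> I01 \<Longrightarrow> nablat f t = f' t"
  using nablat_eq by metis

lemma Ck_SucI: "(\<And>t. t \<in> I01 \<Longrightarrow> (f has_vector_derivative f' t) (at t within I01)) \<Longrightarrow> Ck k f' \<Longrightarrow> Ck (Suc k) f"
  using D1I[of f f'] D1_nablat[of f f'] Ck_cong[of k f' "nablat f"] by auto

lemma Ck_const: "Ck k (\<lambda>t. c)"
proof (induction k arbitrary: c)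
  case 0 then show ?case by simp
next
  case (Suc k) then show ?case by (intro Ck_SucI[where f'="\<lambda>t. 0"]) (auto intro: derivative_eq_intros)
qed

lemma Ck_id: "Ck k (\<lambda>t. t)"
proof (cases k)
  case 0 then show ?thesis by simp
next
  case (Suc j) show ?thesis unfolding Suc
    by (intro Ck_SucI[where f'="\<lambda>t. 1"] Ck_const) (auto intro!: derivative_eq_intros)
qed

lemma Ck_add: "Ck k f \<Longrightarrow> Ck k g \<Longrightarrow> Ck k (\<lambda>t. f t + g t)"
proof (induction k arbitrary: f g)
  case 0 then show ?case by simp
next
  case (Suc k)
  show ?case
    apply (rule Ck_SucI[where f'="\<lambda>t. nablat f t + nablat g t"])
    using Suc by (auto simp: D1_def intro!: derivative_eq_intros)
qed

lemma Ck_bilinear: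
  fixes prod :: "'a::real_normed_vector \<Rightarrow> 'b::real_normed_vector \<Rightarrow> 'c::real_normed_vector"
    and f :: "real \<Rightarrow> 'a" and g :: "real \<Rightarrow> 'b"
  assumes "bounded_bilinear prod"
  shows "Ck k f \<Longrightarrow> Ck k g \<Longrightarrow> Ck k (\<lambda>t. prod (f t) (g t))"
proof (induction k arbitrary: f g)
  case 0 then show ?case by simp
next
  case (Suc k)
  have "Ck k (\<lambda>t. prod (f t) (nablat g t) + prod (nablat f t) (g t))"
    using Suc by (intro Ck_add Suc.IH) (auto intro: Ck_mono)
  then show ?case
    apply (intro Ck_SucI[where f'="\<lambda>t. prod (f t) (nablat g t) + prod (nablat f t) (g t)"])
    using Suc bounded_bilinear.has_vector_derivative[OF assms] by (auto simp: D1_def)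
qed

lemmas Ck_scaleR = Ck_bilinear[OF bounded_bilinear_scaleR]
lemmas Ck_mult = Ck_bilinear[OF bounded_bilinear_mult]
lemmas Ck_inner = Ck_bilinear[OF bounded_bilinear_inner]

lemma Ck_minus: "Ck k f \<Longrightarrow> Ck k (\<lambda>t. - f t)"
  using Ck_scaleR[OF Ck_const[of k "-1"], of f] by simp

lemma Ck_diff: "Ck k f \<Longrightarrow> Ck k g \<Longrightarrow> Ck k (\<lambda>t. f t - g t)"
  using Ck_add[OF _ Ck_minus, of k f g] by simp

lemma Ck_inverse: "Ck k f \<Longrightarrow> (\<And>t. t \<in> I01 \<Longrightarrow> f t \<noteq> (0::real)) \<Longrightarrow> Ck k (\<lambda>t. inverse (f t))"
proof (induction k arbitrary: f)
  case 0 then show ?case by simp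
next
  case (Suc k)
  have "Ck k (\<lambda>t. - (nablat f t * (inverse (f t) * inverse (f t))))"
    using Suc Ck_mono by (intro Ck_minus Ck_mult Suc.IH) auto
  then show ?case
    apply (intro Ck_SucI[where f'="\<lambda>t. - (nablat f t * (inverse (f t) * inverse (f t)))"])
    using Suc by (auto simp: D1_def has_real_derivative_iff_has_vector_derivative[symmetric]
       intro!: derivative_eq_intros)
qed


lemma hvd_norm:
  fixes u :: "real \<Rightarrow> 'a::real_inner"
  assumes d: "(u has_vector_derivative u') (at t within S)" and nz: "u t \<noteq> 0"
  shows "((\<lambda>t. norm (u t)) has_vector_derivative ((u t \<bullet> u') * inverse (norm (u t)))) (at t within S)"
proof -
  have "((\<lambda>t. norm (u t)) has_derivative (\<lambda>y. sgn (u t) \<bullet> (y *\<^sub>R u'))) (at t within S)"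
    using has_derivative_compose[OF d[unfolded has_vector_derivative_def] has_derivative_norm[OF nz]]
    by (simp add: o_def inner_commute)
  moreover have "(\<lambda>y. sgn (u t) \<bullet> (y *\<^sub>R u')) = (\<lambda>y. y *\<^sub>R ((u t \<bullet> u') * inverse (norm (u t))))"
    by (auto simp: sgn_div_norm divide_inverse inner_commute)
  ultimately show ?thesis unfolding has_vector_derivative_def by simp
qed

lemma Ck_norm:
  fixes u :: "real \<Rightarrow> 'a::real_inner"
  shows "Ck k u \<Longrightarrow> (\<And>t. t \<in> I01 \<Longrightarrow> u t \<noteq> 0) \<Longrightarrow> Ck k (\<lambda>t. norm (u t))"
proof (induction k arbitrary: u)
  case 0 then show ?case by simp
next
  case (Suc k)
  have "Ck k (\<lambda>t. (u t \<bullet> nablat u t) * inverse (norm (u t)))"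
    using Suc Ck_mono by (intro Ck_mult Ck_inner Ck_inverse Suc.IH) auto
  then show ?case
    apply (intro Ck_SucI[where f'="\<lambda>t. (u t \<bullet> nablat u t) * inverse (norm (u t))"])
    using Suc by (auto simp: D1_def intro!: hvd_norm)
qed

lemma Ck_nablat: "Ck (Suc k) f \<Longrightarrow> Ck k (nablat f)" by simp

lemma Ck_funpow: "Ck (j + k) f \<Longrightarrow> Ck k ((nablat ^^ j) f)"
  by (induction j arbitrary: f) (auto simp del: funpow.simps simp: funpow_Suc_right)

lemma smooth01_Ck: "smooth01 f \<longleftrightarrow> (\<forall>k. Ck k f)"
proof
  assume "smooth01 f"
  then obtain D where D0: "\<forall>t\<in>I01. D 0 t = f t"
    and DS: "\<forall>k. \<forall>t\<in>I01. (D k has_vector_derivative D (Suc k) t) (at t within I01)"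
    unfolding smooth01_def by blast
  have "\<And>j g. (\<forall>t\<in>I01. g t = D j t) \<Longrightarrow> Ck k g" for k
  proof (induction k)
    case 0 then show ?case by simp
  next
    case (Suc k)
    have hd: "\<And>t. t \<in> I01 \<Longrightarrow> (g has_vector_derivative D (Suc j) t) (at t within I01)"
      using hvd_cong[of _ "D j" g] DS Suc.prems by metis
    show ?case
      by (rule Ck_SucI[OF hd]) (auto intro: Suc.IH)
  qed
  then show "\<forall>k. Ck k f" using D0 by metis
next
  assume A: "\<forall>k. Ck k f"
  show "smooth01 f" unfolding smooth01_def
  proof (intro exI[of _ "\<lambda>k. (nablat ^^ k) f"] conjI ballI allI)
    fix k t assume "t \<in> I01"
    have "Ck (Suc 0) ((nablat ^^ k) f)" using Ck_funpow[of k "Suc 0" f] A by simp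
    then show "((nablat ^^ k) f has_vector_derivative (nablat ^^ Suc k) f t) (at t within I01)"
      using \<open>t \<in> I01\<close> by (simp add: D1_def)
  qed simp
qed

lemma Ck_cont: "Ck (Suc k) f \<Longrightarrow> continuous_on I01 f"
  by (auto simp: D1_def intro!: continuous_on_vector_derivative)


lemma D1_Ck: "Ck (Suc k) f \<Longrightarrow> D1 f" by simp

lemma nablat_bil:
  fixes prod :: "'a::real_normed_vector \<Rightarrow> 'b::real_normed_vector \<Rightarrow> 'c::real_normed_vector"
    and f :: "real \<Rightarrow> 'a" and g :: "real \<Rightarrow> 'b"
  assumes "bounded_bilinear prod" "D1 f" "D1 g" "t \<in> I01"
  shows "nablat (\<lambda>t. prod (f t) (g t)) t = prod (f t) (nablat g t) + prod (nablat f t) (g t)"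
  using assms by (intro nablat_eq bounded_bilinear.has_vector_derivative) (auto simp: D1_def)

lemmas nablat_scaleR = nablat_bil[OF bounded_bilinear_scaleR]
lemmas nablat_mult = nablat_bil[OF bounded_bilinear_mult]
lemmas nablat_inner = nablat_bil[OF bounded_bilinear_inner]

lemma nablat_add: "D1 f \<Longrightarrow> D1 g \<Longrightarrow> t \<in> I01 \<Longrightarrow> nablat (\<lambda>t. f t + g t) t = nablat f t + nablat g t"
  by (intro nablat_eq) (auto simp: D1_def intro!: derivative_eq_intros)

lemma nablat_diff: "D1 f \<Longrightarrow> D1 g \<Longrightarrow> t \<in> I01 \<Longrightarrow> nablat (\<lambda>t. f t - g t) t = nablat f t - nablat g t"
  by (intro nablat_eq) (auto simp: D1_def intro!: derivative_eq_intros)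

lemma nablat_const: "t \<in> I01 \<Longrightarrow> nablat (\<lambda>t. c) t = 0"
  by (intro nablat_eq) (auto intro!: derivative_eq_intros)

lemma nablat_inverse: "D1 f \<Longrightarrow> t \<in> I01 \<Longrightarrow> f t \<noteq> (0::real) \<Longrightarrow>
   nablat (\<lambda>t. inverse (f t)) t = - (nablat f t * (inverse (f t) * inverse (f t)))"
  by (intro nablat_eq) (auto simp: D1_def has_real_derivative_iff_has_vector_derivative[symmetric]
       intro!: derivative_eq_intros)

lemma nablat_norm:
  fixes u :: "real \<Rightarrow> 'a::real_inner"
  shows "D1 u \<Longrightarrow> t \<in> I01 \<Longrightarrow> u t \<noteq> 0 \<Longrightarrow>
   nablat (\<lambda>t. norm (u t)) t = (u t \<bullet> nablat u t) * inverse (norm (u t))"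
  by (intro nablat_eq hvd_norm) (auto simp: D1_def)

lemma unitv_eq: "unitv u = (\<lambda>t. inverse (norm (u t)) *\<^sub>R u t)"
  by (auto simp: unitv_def divide_inverse)

lemma imm_Ck: "immersion u \<Longrightarrow> Ck k u"
  unfolding immersion_def smooth01_Ck by blast

lemma imm_nz: "immersion u \<Longrightarrow> t \<in> I01 \<Longrightarrow> u t \<noteq> 0"
  unfolding immersion_def by blast

lemma Ck_v: "immersion u \<Longrightarrow> Ck k (unitv u)"
  unfolding unitv_eq using imm_Ck imm_nz
  by (metis Ck_inverse Ck_norm Ck_scaleR norm_eq_zero)

lemma v_norm: "immersion u \<Longrightarrow> t \<in> I01 \<Longrightarrow> unitv u t \<bullet> unitv u t = 1"
  using imm_nz[of u t] by (simp add: unitv_def inner_commute power2_norm_eq_inner[symmetric] 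
       field_simps power2_eq_square dot_square_norm)

lemma v_v1: assumes "immersion u" "t \<in> I01"
  shows "unitv u t \<bullet> nablat (unitv u) t = 0"
proof -
  have D: "D1 (unitv u)" using Ck_v[OF assms(1), of 1] by simp
  have "nablat (\<lambda>t. unitv u t \<bullet> unitv u t) t = nablat (\<lambda>t. 1) t"
    using assms v_norm by (intro nablat_cong) auto
  then show ?thesis using nablat_inner[OF D D assms(2)] nablat_const[OF assms(2), where c="1::real"]
    by (simp add: inner_commute)
qed

lemma v_v2: assumes "immersion u" "t \<in> I01"
  shows "unitv u t \<bullet> nablat (nablat (unitv u)) t = - (nablat (unitv u) t \<bullet> nablat (unitv u) t)"
proof -
  have D: "D1 (unitv u)" "D1 (nablat (unitv u))" using Ck_v[OF assms(1), of 2] by (simp_all add: numeral_2_eq_2)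
  have "nablat (\<lambda>t. unitv u t \<bullet> nablat (unitv u) t) t = nablat (\<lambda>t. 0) t"
    using assms v_v1 by (intro nablat_cong) auto
  then show ?thesis using nablat_inner[OF D assms(2)] nablat_const[OF assms(2), where c="0::real"]
    by (simp add: inner_commute)
qed


lemma tpart_add: "tpart u t (x + y) = tpart u t x + tpart u t y"
  by (simp add: tpart_def inner_add_left scaleR_add_left)
lemma tpart_diff: "tpart u t (x - y) = tpart u t x - tpart u t y"
  by (simp add: tpart_def inner_diff_left scaleR_diff_left)
lemma tpart_scale: "tpart u t (c *\<^sub>R x) = c *\<^sub>R tpart u t x"
  by (simp add: tpart_def)
lemma npart_add: "npart u t (x + y) = npart u t x + npart u t y"
  by (simp add: npart_def tpart_add)
lemma npart_diff: "npart u t (x - y) = npart u t x - npart u t y"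
  by (simp add: npart_def tpart_diff)
lemma npart_scale: "npart u t (c *\<^sub>R x) = c *\<^sub>R npart u t x"
  by (simp add: npart_def tpart_scale scaleR_diff_right)

lemma polar_norm: "(norm (c *\<^sub>R (x + y)))\<^sup>2 - (norm (c *\<^sub>R (x - y)))\<^sup>2 = 4 * c\<^sup>2 * (x \<bullet> (y::'a::real_inner))"
proof -
  have eq: "(norm (x + y))\<^sup>2 - (norm (x - y))\<^sup>2 = 4 * (x \<bullet> y)"
    using dot_norm[of x y] dot_norm_neg[of x y] by simp
  have h: "norm (c *\<^sub>R z) ^ 2 = c\<^sup>2 * norm z ^ 2" for z :: 'a
    by (simp add: power_mult_distrib)
  show ?thesis unfolding h right_diff_distrib[symmetric] eq by simp
qed

lemma Q_polar:
  assumes "n \<noteq> 0"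
  shows "(a\<^sup>2 * (norm (npart u t ((1 / n) *\<^sub>R (x + y))))\<^sup>2 + b\<^sup>2 * (norm (tpart u t ((1 / n) *\<^sub>R (x + y))))\<^sup>2) * n
       - (a\<^sup>2 * (norm (npart u t ((1 / n) *\<^sub>R (x - y))))\<^sup>2 + b\<^sup>2 * (norm (tpart u t ((1 / n) *\<^sub>R (x - y))))\<^sup>2) * n
     = 4 * ((a\<^sup>2 * (npart u t x \<bullet> npart u t y) + b\<^sup>2 * (tpart u t x \<bullet> tpart u t y)) / n)"
proof -
  have 1: "(norm (npart u t ((1 / n) *\<^sub>R (x + y))))\<^sup>2 - (norm (npart u t ((1 / n) *\<^sub>R (x - y))))\<^sup>2
     = 4 * (1/n)\<^sup>2 * (npart u t x \<bullet> npart u t y)"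
    unfolding npart_scale npart_add npart_diff by (rule polar_norm)
  have 2: "(norm (tpart u t ((1 / n) *\<^sub>R (x + y))))\<^sup>2 - (norm (tpart u t ((1 / n) *\<^sub>R (x - y))))\<^sup>2
     = 4 * (1/n)\<^sup>2 * (tpart u t x \<bullet> tpart u t y)"
    unfolding tpart_scale tpart_add tpart_diff by (rule polar_norm)
  have e: "\<And>A1 A2 B1 B2::real. (a\<^sup>2 * A1 + b\<^sup>2 * B1) * n - (a\<^sup>2 * A2 + b\<^sup>2 * B2) * n
     = (a\<^sup>2 * (A1 - A2) + b\<^sup>2 * (B1 - B2)) * n"
    by (simp add: algebra_simps)
  show ?thesis unfolding e 1 2 using assms by (simp add: field_simps power2_eq_square)
qed

lemma polar_sq: "(norm (x + y))\<^sup>2 - (norm (x - y))\<^sup>2 = 4 * (x \<bullet> (y::'a::real_inner))"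
  using dot_norm[of x y] dot_norm_neg[of x y] by simp

lemma Gbil_eq:
  fixes u h k :: "real \<Rightarrow> 'a::euclidean_space"
  assumes imm: "immersion u" and h: "Ck 2 h" and k: "Ck 2 k"
  shows "Gbil a b u h k = h 0 \<bullet> k 0 + integral I01 (\<lambda>t.
     (a\<^sup>2 * (npart u t (nablat h t) \<bullet> npart u t (nablat k t))
      + b\<^sup>2 * (tpart u t (nablat h t) \<bullet> tpart u t (nablat k t))) / norm (u t))"
proof -
  have Dh: "D1 h" and Dk: "D1 k" using h k by (simp_all add: numeral_2_eq_2)
  have ch: "continuous_on I01 (nablat h)" and ck: "continuous_on I01 (nablat k)"
    using h k Ck_cont[of 0 "nablat h"] Ck_cont[of 0 "nablat k"] by (simp_all add: numeral_2_eq_2)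
  have cu: "continuous_on I01 u" using Ck_cont[OF imm_Ck[OF imm]] .
  have nz: "\<And>t. t \<in> I01 \<Longrightarrow> norm (u t) \<noteq> 0" using imm_nz[OF imm] by simp
  define B where "B t = (a\<^sup>2 * (npart u t (nablat h t) \<bullet> npart u t (nablat k t))
      + b\<^sup>2 * (tpart u t (nablat h t) \<bullet> tpart u t (nablat k t))) / norm (u t)" for t
  define Ip where "Ip t = (a\<^sup>2 * (norm (npart u t (nablal u (\<lambda>t. h t + k t) t)))\<^sup>2
                       + b\<^sup>2 * (norm (tpart u t (nablal u (\<lambda>t. h t + k t) t)))\<^sup>2) * norm (u t)" for t
  define Im where "Im t = (a\<^sup>2 * (norm (npart u t (nablal u (\<lambda>t. h t - k t) t)))\<^sup>2
                       + b\<^sup>2 * (norm (tpart u t (nablal u (\<lambda>t. h t - k t) t)))\<^sup>2) * norm (u t)" for t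
  define Jp where "Jp t = (a\<^sup>2 * (norm (npart u t ((1 / norm (u t)) *\<^sub>R (nablat h t + nablat k t))))\<^sup>2
                       + b\<^sup>2 * (norm (tpart u t ((1 / norm (u t)) *\<^sub>R (nablat h t + nablat k t))))\<^sup>2) * norm (u t)" for t
  define Jm where "Jm t = (a\<^sup>2 * (norm (npart u t ((1 / norm (u t)) *\<^sub>R (nablat h t - nablat k t))))\<^sup>2
                       + b\<^sup>2 * (norm (tpart u t ((1 / norm (u t)) *\<^sub>R (nablat h t - nablat k t))))\<^sup>2) * norm (u t)" for t
  have IJp: "\<And>t. t \<in> I01 \<Longrightarrow> Ip t = Jp t"
    unfolding Ip_def Jp_def nablal_def using nablat_add[OF Dh Dk] by simp
  have IJm: "\<And>t. t \<in> I01 \<Longrightarrow> Im t = Jm t"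
    unfolding Im_def Jm_def nablal_def using nablat_diff[OF Dh Dk] by simp
  have JB: "\<And>t. t \<in> I01 \<Longrightarrow> Jp t - Jm t = 4 * B t"
    unfolding Jp_def Jm_def B_def using nz by (intro Q_polar) auto
  have cJp: "continuous_on I01 Jp" unfolding Jp_def npart_def tpart_def unitv_def
    using ch ck cu nz by (intro continuous_intros) auto
  have cJm: "continuous_on I01 Jm" unfolding Jm_def npart_def tpart_def unitv_def
    using ch ck cu nz by (intro continuous_intros) auto
  have iJp: "Jp integrable_on I01" and iJm: "Jm integrable_on I01"
    using cJp cJm unfolding I01_def by (auto intro: integrable_continuous_interval)
  have iIp: "Ip integrable_on I01" using integrable_eq[OF iJp] IJp by metis
  have iIm: "Im integrable_on I01" using integrable_eq[OF iJm] IJm by metis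
  have "integral I01 Ip - integral I01 Im = integral I01 (\<lambda>t. Ip t - Im t)"
    using integral_diff[OF iIp iIm] by simp
  also have "\<dots> = integral I01 (\<lambda>t. 4 * B t)"
    using IJp IJm JB by (intro integral_cong) auto
  also have "\<dots> = 4 * integral I01 B" by simp
  finally have ii: "integral I01 Ip - integral I01 Im = 4 * integral I01 B" .
  have "Gbil a b u h k = ((norm (h 0 + k 0))\<^sup>2 - (norm (h 0 - k 0))\<^sup>2 + (integral I01 Ip - integral I01 Im)) / 4"
    unfolding Gbil_def Gq_def Ip_def Im_def by simp
  also have "\<dots> = h 0 \<bullet> k 0 + integral I01 B" unfolding ii polar_sq by simp
  finally show ?thesis unfolding B_def .
qed

definition phiF :: "(real \<Rightarrow> 'a::euclidean_space) \<Rightarrow> (real \<Rightarrow> 'a) \<Rightarrow> real \<Rightarrow> real" where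
  "phiF u h t = (nablat h t \<bullet> unitv u t) * inverse (norm (u t))"

definition FF :: "real \<Rightarrow> real \<Rightarrow> (real \<Rightarrow> 'a::euclidean_space) \<Rightarrow> (real \<Rightarrow> 'a) \<Rightarrow> real \<Rightarrow> real" where
  "FF a b u h t = a\<^sup>2 * (nablat h t \<bullet> nablat (unitv u) t) * inverse (norm (u t)) - b\<^sup>2 * nablat (phiF u h) t"

lemma Ck_invnorm: fixes u :: "real \<Rightarrow> 'a::euclidean_space"
  shows "immersion u \<Longrightarrow> Ck k (\<lambda>t. inverse (norm (u t)))"
  by (intro Ck_inverse Ck_norm) (auto simp: imm_Ck imm_nz)

lemma Ck_phiF: assumes "immersion u" "\<And>k. Ck k h" shows "Ck k (phiF u h)"
proof -
  have "Ck k (\<lambda>t. (nablat h t \<bullet> unitv u t) * inverse (norm (u t)))"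
    using assms Ck_v Ck_invnorm by (intro Ck_mult Ck_inner) (auto intro: Ck_nablat)
  moreover have "phiF u h = (\<lambda>t. (nablat h t \<bullet> unitv u t) * inverse (norm (u t)))"
    by (rule ext) (simp add: phiF_def)
  ultimately show ?thesis by simp
qed

lemma Ck_FF: assumes "immersion u" "\<And>k. Ck k h" shows "Ck k (FF a b u h)"
proof -
  have "Ck k (\<lambda>t. a\<^sup>2 * (nablat h t \<bullet> nablat (unitv u) t) * inverse (norm (u t)) - b\<^sup>2 * nablat (phiF u h) t)"
    using assms Ck_v Ck_invnorm Ck_phiF Ck_phiF[OF assms, of "Suc k"]
    by (intro Ck_mult Ck_inner Ck_diff Ck_const) (auto intro: Ck_nablat)
  moreover have "FF a b u h = (\<lambda>t. a\<^sup>2 * (nablat h t \<bullet> nablat (unitv u) t) * inverse (norm (u t)) - b\<^sup>2 * nablat (phiF u h) t)"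
    by (rule ext) (simp add: FF_def)
  ultimately show ?thesis by simp
qed

lemma G_mv:
  fixes u h :: "real \<Rightarrow> 'a::euclidean_space"
  assumes imm: "immersion u" and h: "smooth01 h" and m: "m \<in> Cfun"
  shows "Gbil a b u h (\<lambda>t. m t *\<^sub>R unitv u t) = integral I01 (\<lambda>t. m t * FF a b u h t)"
proof -
  have Ch: "\<And>k. Ck k h" using h smooth01_Ck by blast
  have Cm: "\<And>k. Ck k m" and m0: "m 0 = 0" and m1: "m 1 = 0" using m unfolding Cfun_def smooth01_Ck by auto
  have Cv: "\<And>k. Ck k (unitv u)" using Ck_v[OF imm] .
  have Cphi: "\<And>k. Ck k (phiF u h)" using Ck_phiF[OF imm Ch] .
  have CF: "\<And>k. Ck k (FF a b u h)" using Ck_FF[OF imm Ch] .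
  have Ck2: "Ck 2 (\<lambda>t. m t *\<^sub>R unitv u t)" using Cm Cv by (intro Ck_scaleR)
  have Dm: "D1 m" and Dv: "D1 (unitv u)" and Dphi: "D1 (phiF u h)"
    using Cm[of 1] Cv[of 1] Cphi[of 1] by auto
  have nz: "\<And>t. t \<in> I01 \<Longrightarrow> norm (u t) \<noteq> 0" using imm_nz[OF imm] by simp
  define B where "B t = (a\<^sup>2 * (npart u t (nablat h t) \<bullet> npart u t (nablat (\<lambda>t. m t *\<^sub>R unitv u t) t))
      + b\<^sup>2 * (tpart u t (nablat h t) \<bullet> tpart u t (nablat (\<lambda>t. m t *\<^sub>R unitv u t) t))) / norm (u t)" for t
  define g where "g t = m t * nablat (phiF u h) t + nablat m t * phiF u h t" for t
  have G: "Gbil a b u h (\<lambda>t. m t *\<^sub>R unitv u t) = integral I01 B"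
    unfolding B_def using Gbil_eq[OF imm _ Ck2, of h a b] Ch m0 by simp
  have Bt: "B t = m t * FF a b u h t + b\<^sup>2 * g t" if t: "t \<in> I01" for t
  proof -
    have nk: "nablat (\<lambda>t. m t *\<^sub>R unitv u t) t = m t *\<^sub>R nablat (unitv u) t + nablat m t *\<^sub>R unitv u t"
      using nablat_scaleR[OF Dm Dv t] .
    have vv: "unitv u t \<bullet> unitv u t = 1" using v_norm[OF imm t] .
    have vv1: "unitv u t \<bullet> nablat (unitv u) t = 0" using v_v1[OF imm t] .
    have vv1': "nablat (unitv u) t \<bullet> unitv u t = 0" using vv1 by (simp add: inner_commute)
    show ?thesis
      unfolding B_def g_def FF_def nk npart_def tpart_def phiF_def
      using nz[OF t]
      by (simp add: inner_diff_left inner_diff_right inner_add_left inner_add_right vv vv1 vv1'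
          field_simps inner_commute)
  qed
  have hg: "(g has_integral 0) I01"
  proof -
    have "(g has_integral (m 1 * phiF u h 1 - m 0 * phiF u h 0)) {0..1}"
      unfolding g_def
      apply (rule fundamental_theorem_of_calculus)
      using Dm Dphi
      by (auto simp: D1_def I01_def intro!: bounded_bilinear.has_vector_derivative[OF bounded_bilinear_mult])
    then show ?thesis using m0 m1 by (simp add: I01_def)
  qed
  have cmF: "continuous_on I01 (\<lambda>t. m t * FF a b u h t)"
    using Ck_cont[OF Ck_mult[OF Cm CF]] by simp
  have imF: "(\<lambda>t. m t * FF a b u h t) integrable_on I01"
    using cmF unfolding I01_def by (auto intro: integrable_continuous_interval)
  have "integral I01 B = integral I01 (\<lambda>t. m t * FF a b u h t + b\<^sup>2 * g t)"
    using Bt by (intro integral_cong) auto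
  also have "\<dots> = integral I01 (\<lambda>t. m t * FF a b u h t) + b\<^sup>2 * integral I01 g"
    using integral_add[OF imF has_integral_mult_right[OF hg, THEN has_integral_integrable]]
      integral_mult_right by simp
  also have "\<dots> = integral I01 (\<lambda>t. m t * FF a b u h t)" using integral_unique[OF hg] by simp
  finally show ?thesis using G by simp
qed


definition EE :: "real \<Rightarrow> real \<Rightarrow> (real \<Rightarrow> 'a::euclidean_space) \<Rightarrow> (real \<Rightarrow> 'a) \<Rightarrow> real \<Rightarrow> real" where
  "EE a b u h t = ((a / b)\<^sup>2 - 1) * (nablat h t \<bullet> nablat (unitv u) t)
                  - (nablat (nablat h) t \<bullet> unitv u t)
                  + (1 / norm (u t)) * (nablat u t \<bullet> unitv u t) * (nablat h t \<bullet> unitv u t)"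

lemma FF_EE:
  fixes u h :: "real \<Rightarrow> 'a::euclidean_space"
  assumes imm: "immersion u" and Ch: "\<And>k. Ck k h" and b: "b \<noteq> 0" and t: "t \<in> I01"
  shows "FF a b u h t = b\<^sup>2 * inverse (norm (u t)) * EE a b u h t"
proof -
  have Cv: "\<And>k. Ck k (unitv u)" using Ck_v[OF imm] .
  have Cu: "\<And>k. Ck k u" using imm_Ck[OF imm] .
  have nz: "u t \<noteq> 0" using imm_nz[OF imm t] .
  have "Ck (Suc 0) (\<lambda>t. nablat h t \<bullet> unitv u t)"
    by (rule Ck_inner) (use Ch[of 2] Cv[of 1] in \<open>simp_all add: numeral_2_eq_2\<close>)
  then have D1: "D1 (\<lambda>t. nablat h t \<bullet> unitv u t)" by simp
  have D2: "D1 (\<lambda>t. inverse (norm (u t)))" using Ck_invnorm[OF imm, of 1] by simp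
  have D3: "D1 (\<lambda>t. norm (u t))" using Ck_norm[OF Cu, of 1] imm_nz[OF imm] by simp
  have Dh1: "D1 (nablat h)" using Ch[of 2] by (simp add: numeral_2_eq_2)
  have Dv: "D1 (unitv u)" and Du: "D1 u" using Cv[of 1] Cu[of 1] by simp_all
  have pe: "phiF u h = (\<lambda>t. (nablat h t \<bullet> unitv u t) * inverse (norm (u t)))"
    by (rule ext) (simp add: phiF_def)
  have np: "nablat (phiF u h) t = (nablat h t \<bullet> unitv u t) * nablat (\<lambda>t. inverse (norm (u t))) t
      + nablat (\<lambda>t. nablat h t \<bullet> unitv u t) t * inverse (norm (u t))"
    unfolding pe using nablat_mult[OF D1 D2 t] .
  have ni: "nablat (\<lambda>t. nablat h t \<bullet> unitv u t) t = nablat h t \<bullet> nablat (unitv u) t + nablat (nablat h) t \<bullet> unitv u t"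
    using nablat_inner[OF Dh1 Dv t] .
  have nv: "nablat (\<lambda>t. inverse (norm (u t))) t = - (nablat (\<lambda>t. norm (u t)) t * (inverse (norm (u t)) * inverse (norm (u t))))"
    using nablat_inverse[OF D3 t] nz by simp
  have nn: "nablat (\<lambda>t. norm (u t)) t = (u t \<bullet> nablat u t) * inverse (norm (u t))"
    using nablat_norm[OF Du t nz] .
  have uv: "nablat u t \<bullet> unitv u t = inverse (norm (u t)) * (u t \<bullet> nablat u t)"
    by (simp add: unitv_def inner_commute divide_inverse)
  show ?thesis
    unfolding FF_def EE_def np ni nv nn uv using nz b
    by (simp add: field_simps power2_eq_square)
qed

lemma nonneg_aux: "0 < x \<Longrightarrow> x < 1 \<Longrightarrow> 0 \<le> x * (1 - x) * y * (y::real)"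
proof -
  assume "0 < x" "x < 1"
  then have "0 \<le> x * (1 - x)" by simp
  then have "0 \<le> (x * (1 - x)) * (y * y)" using zero_le_square mult_nonneg_nonneg by blast
  then show ?thesis by (simp add: mult.assoc)
qed

lemma horiz_iff:
  fixes u h :: "real \<Rightarrow> 'a::euclidean_space"
  assumes imm: "immersion u" and b: "b \<noteq> 0" and h: "smooth01 h"
  shows "horizontal a b u h \<longleftrightarrow> (\<forall>t\<in>I01. EE a b u h t = 0)"
proof -
  have Ch: "\<And>k. Ck k h" using h smooth01_Ck by blast
  have CF: "\<And>k. Ck k (FF a b u h)" using Ck_FF[OF imm Ch] .
  have nz: "\<And>t. t \<in> I01 \<Longrightarrow> norm (u t) \<noteq> 0" using imm_nz[OF imm] by simp
  have H: "horizontal a b u h \<longleftrightarrow> (\<forall>m\<in>Cfun. integral I01 (\<lambda>t. m t * FF a b u h t) = 0)"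
    unfolding horizontal_def using G_mv[OF imm h] by simp
  have FE: "\<And>t. t \<in> I01 \<Longrightarrow> FF a b u h t = 0 \<longleftrightarrow> EE a b u h t = 0"
    using FF_EE[OF imm Ch b] nz b by simp
  show ?thesis
  proof
    assume "horizontal a b u h"
    then have Z: "\<forall>m\<in>Cfun. integral I01 (\<lambda>t. m t * FF a b u h t) = 0" using H by simp
    define m0 where "m0 t = t * (1 - t) * FF a b u h t" for t
    have Cm0: "\<And>k. Ck k m0" unfolding m0_def[abs_def]
      using CF by (intro Ck_mult Ck_id Ck_diff Ck_const)
    have "m0 \<in> Cfun" unfolding Cfun_def smooth01_Ck using Cm0 by (simp add: m0_def)
    then have i0: "integral I01 (\<lambda>t. m0 t * FF a b u h t) = 0" using Z by blast
    have cont: "continuous_on I01 (\<lambda>t. m0 t * FF a b u h t)"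
      using Ck_cont[OF Ck_mult[OF Cm0 CF]] by simp
    have int: "(\<lambda>t. m0 t * FF a b u h t) integrable_on I01"
      using cont unfolding I01_def by (auto intro: integrable_continuous_interval)
    have hi: "((\<lambda>t. m0 t * FF a b u h t) has_integral 0) (cbox 0 1)"
      using integrable_integral[OF int] i0 by (simp add: I01_def)
    have inner0: "FF a b u h t = 0" if "t \<in> {0<..<1}" for t
    proof -
      have "m0 t * FF a b u h t = 0"
        apply (rule has_integral_0_cbox_imp_0[OF _ _ hi])
        using cont that by (auto simp: I01_def m0_def intro: nonneg_aux)
      then show ?thesis using that by (auto simp: m0_def)
    qed
    have cF: "continuous_on I01 (FF a b u h)" using Ck_cont[OF CF] .
    have cl: "closed {t \<in> I01. FF a b u h t = 0}"
      using continuous_closed_preimage_constant[OF cF] by (simp add: I01_def)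
    have "{0<..<1} \<subseteq> {t \<in> I01. FF a b u h t = (0::real)}" using inner0 by (auto simp: I01_def)
    then have "closure {0<..<1::real} \<subseteq> {t \<in> I01. FF a b u h t = 0}"
      using closure_minimal cl by blast
    then have "\<forall>t\<in>I01. FF a b u h t = 0" by (auto simp: I01_def)
    then show "\<forall>t\<in>I01. EE a b u h t = 0" using FE by blast
  next
    assume "\<forall>t\<in>I01. EE a b u h t = 0"
    then have "\<forall>t\<in>I01. FF a b u h t = 0" using FE by blast
    then have "integral I01 (\<lambda>t. m t * FF a b u h t) = 0" for m
      using integral_cong[of I01 "\<lambda>t. m t * FF a b u h t" "\<lambda>t. 0"] by simp
    then show "horizontal a b u h" using H by simp
  qed
qed

lemma part3_pt:
  fixes u w :: "real \<Rightarrow> 'a::euclidean_space"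
  assumes imm: "immersion u" and Cw: "\<And>k. Ck k w" and Cm: "\<And>k. Ck k m" and t: "t \<in> I01"
  shows "EE 1 (1/2) u (\<lambda>t. w t - m t *\<^sub>R unitv u t) t = 0 \<longleftrightarrow>
     (nablat (nablat m) t
                  - (((1 / norm (u t)) *\<^sub>R nablat u t) \<bullet> unitv u t) * nablat m t
                  - 4 * (norm (nablat (unitv u) t))\<^sup>2 * m t
                = (nablat (nablat w) t \<bullet> unitv u t)
                  - 3 * (nablat w t \<bullet> nablat (unitv u) t)
                  - (((1 / norm (u t)) *\<^sub>R nablat u t) \<bullet> unitv u t) * (nablat w t \<bullet> unitv u t))"
proof -
  have Cv: "\<And>k. Ck k (unitv u)" using Ck_v[OF imm] .
  have CS: "\<And>f k. (\<And>k. Ck k f) \<Longrightarrow> Ck k (nablat f)" using Ck_nablat by blast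
  have D: "\<And>f. (\<And>k. Ck k f) \<Longrightarrow> D1 f" using D1_Ck by blast
  have Dw: "D1 w" "D1 (nablat w)" using D Cw CS by blast+
  have Dm: "D1 m" "D1 (nablat m)" using D Cm CS by blast+
  have Dv: "D1 (unitv u)" "D1 (nablat (unitv u))" using D Cv CS by blast+
  have Dmv: "D1 (\<lambda>t. m t *\<^sub>R unitv u t)" using Cm Cv by (intro D[OF Ck_scaleR])
  have Cv1: "\<And>k. Ck k (nablat (unitv u))" using CS[OF Cv] .
  have Cm1: "\<And>k. Ck k (nablat m)" using CS[OF Cm] .
  have Dmv1: "D1 (\<lambda>s. m s *\<^sub>R nablat (unitv u) s)" using Ck_scaleR[OF Cm Cv1] by (intro D)
  have Dmv2: "D1 (\<lambda>s. nablat m s *\<^sub>R unitv u s)" using Ck_scaleR[OF Cm1 Cv] by (intro D)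
  have h1: "nablat (\<lambda>t. w t - m t *\<^sub>R unitv u t) s =
      nablat w s - (m s *\<^sub>R nablat (unitv u) s + nablat m s *\<^sub>R unitv u s)" if "s \<in> I01" for s
    using nablat_diff[OF Dw(1) Dmv that] nablat_scaleR[OF Dm(1) Dv(1) that] by simp
  have h2: "nablat (nablat (\<lambda>t. w t - m t *\<^sub>R unitv u t)) t =
      nablat (nablat w) t - ((m t *\<^sub>R nablat (nablat (unitv u)) t + nablat m t *\<^sub>R nablat (unitv u) t)
        + (nablat m t *\<^sub>R nablat (unitv u) t + nablat (nablat m) t *\<^sub>R unitv u t))"
  proof -
    have "nablat (nablat (\<lambda>t. w t - m t *\<^sub>R unitv u t)) t =
       nablat (\<lambda>s. nablat w s - (m s *\<^sub>R nablat (unitv u) s + nablat m s *\<^sub>R unitv u s)) t"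
      using h1 t by (intro nablat_cong) auto
    also have "\<dots> = nablat (nablat w) t - (nablat (\<lambda>s. m s *\<^sub>R nablat (unitv u) s) t
        + nablat (\<lambda>s. nablat m s *\<^sub>R unitv u s) t)"
    proof -
      have "D1 (\<lambda>s. m s *\<^sub>R nablat (unitv u) s + nablat m s *\<^sub>R unitv u s)"
        using Ck_add[OF Ck_scaleR[OF Cm Cv1] Ck_scaleR[OF Cm1 Cv]] by (intro D)
      then show ?thesis using nablat_diff[OF Dw(2) _ t] nablat_add[OF Dmv1 Dmv2 t] by simp
    qed
    also have "\<dots> = nablat (nablat w) t - ((m t *\<^sub>R nablat (nablat (unitv u)) t + nablat m t *\<^sub>R nablat (unitv u) t)
        + (nablat m t *\<^sub>R nablat (unitv u) t + nablat (nablat m) t *\<^sub>R unitv u t))"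
      using nablat_scaleR[OF Dm(1) Dv(2) t] nablat_scaleR[OF Dm(2) Dv(1) t] by simp
    finally show ?thesis .
  qed
  have vv: "unitv u t \<bullet> unitv u t = 1" using v_norm[OF imm t] .
  have vv1: "unitv u t \<bullet> nablat (unitv u) t = 0" using v_v1[OF imm t] .
  have vv1': "nablat (unitv u) t \<bullet> unitv u t = 0" using vv1 by (simp add: inner_commute)
  have vv2: "nablat (nablat (unitv u)) t \<bullet> unitv u t = - (nablat (unitv u) t \<bullet> nablat (unitv u) t)"
    using v_v2[OF imm t] by (simp add: inner_commute)
  show ?thesis
    unfolding EE_def h1[OF t] h2 power2_norm_eq_inner
    by (simp add: inner_diff_left inner_diff_right inner_add_left inner_add_right vv vv1 vv1' vv2
        algebra_simps diff_divide_distrib)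
qed

theorem mainTheorem1:
  fixes u :: "real \<Rightarrow> 'a::euclidean_space" and a b :: real
  assumes "immersion u" and "b \<noteq> 0"
  shows
   "(\<forall>h. smooth01 h \<longrightarrow>
      (horizontal a b u h \<longleftrightarrow>
        (\<forall>t\<in>I01. ((a / b)\<^sup>2 - 1) * (nablat h t \<bullet> nablat (unitv u) t)
                  - (nablat (nablat h) t \<bullet> unitv u t)
                  + (1 / norm (u t)) * (nablat u t \<bullet> unitv u t) * (nablat h t \<bullet> unitv u t) = 0)))
    \<and> (\<forall>h. smooth01 h \<longrightarrow>
      (horizontal 1 (1/2) u h \<longleftrightarrow>
        (\<forall>t\<in>I01. 3 * (nablat h t \<bullet> nablat (unitv u) t)
                  - (nablat (nablat h) t \<bullet> unitv u t)
                  + (1 / norm (u t)) * (nablat u t \<bullet> unitv u t) * (nablat h t \<bullet> unitv u t) = 0)))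
    \<and> (\<forall>w. smooth01 w \<longrightarrow> (\<forall>m\<in>Cfun.
      (horizontal 1 (1/2) u (\<lambda>t. w t - m t *\<^sub>R unitv u t) \<longleftrightarrow>
        (\<forall>t\<in>I01. nablat (nablat m) t
                  - (((1 / norm (u t)) *\<^sub>R nablat u t) \<bullet> unitv u t) * nablat m t
                  - 4 * (norm (nablat (unitv u) t))\<^sup>2 * m t
                = (nablat (nablat w) t \<bullet> unitv u t)
                  - 3 * (nablat w t \<bullet> nablat (unitv u) t)
                  - (((1 / norm (u t)) *\<^sub>R nablat u t) \<bullet> unitv u t) * (nablat w t \<bullet> unitv u t)))))"
proof (intro conjI allI impI ballI)
  fix h :: "real \<Rightarrow> 'a" assume h: "smooth01 h"
  show "horizontal a b u h \<longleftrightarrow>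
        (\<forall>t\<in>I01. ((a / b)\<^sup>2 - 1) * (nablat h t \<bullet> nablat (unitv u) t)
                  - (nablat (nablat h) t \<bullet> unitv u t)
                  + (1 / norm (u t)) * (nablat u t \<bullet> unitv u t) * (nablat h t \<bullet> unitv u t) = 0)"
    using horiz_iff[OF assms h, of a] unfolding EE_def .
next
  fix h :: "real \<Rightarrow> 'a" assume h: "smooth01 h"
  have "(1 / (1 / 2 :: real))\<^sup>2 - 1 = 3" by simp
  then show "horizontal 1 (1/2) u h \<longleftrightarrow>
        (\<forall>t\<in>I01. 3 * (nablat h t \<bullet> nablat (unitv u) t)
                  - (nablat (nablat h) t \<bullet> unitv u t)
                  + (1 / norm (u t)) * (nablat u t \<bullet> unitv u t) * (nablat h t \<bullet> unitv u t) = 0)"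
    using horiz_iff[OF assms(1) _ h, of "1/2" 1] unfolding EE_def by simp
next
  fix w :: "real \<Rightarrow> 'a" and m assume w: "smooth01 w" and m: "m \<in> Cfun"
  have Cw: "\<And>k. Ck k w" using w smooth01_Ck by blast
  have Cm: "\<And>k. Ck k m" using m unfolding Cfun_def smooth01_Ck by blast
  have sh: "smooth01 (\<lambda>t. w t - m t *\<^sub>R unitv u t)"
    unfolding smooth01_Ck using Cw Cm Ck_v[OF assms(1)] by (intro allI Ck_diff Ck_scaleR)
  show "horizontal 1 (1/2) u (\<lambda>t. w t - m t *\<^sub>R unitv u t) \<longleftrightarrow>
        (\<forall>t\<in>I01. nablat (nablat m) t
                  - (((1 / norm (u t)) *\<^sub>R nablat u t) \<bullet> unitv u t) * nablat m t
                  - 4 * (norm (nablat (unitv u) t))\<^sup>2 * m t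
                = (nablat (nablat w) t \<bullet> unitv u t)
                  - 3 * (nablat w t \<bullet> nablat (unitv u) t)
                  - (((1 / norm (u t)) *\<^sub>R nablat u t) \<bullet> unitv u t) * (nablat w t \<bullet> unitv u t))"
    using horiz_iff[OF assms(1) _ sh, of "1/2" 1] part3_pt[OF assms(1) Cw Cm] by simp
qed

end
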